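(* Consider the $k$-agent prophet game with random tie-breaking, and assume $n\ge k$. In every Nash equilibrium $S$ of the game, the expected social welfare satisfies $$\sum_{i=1}^k u_i(S)\ \ge\ \frac12\,\mathbb{E}\Big[\sum_{j=1}^{k}y_j\Big].$$
   Context: Prophet game with competing agents: there are $n$ rewards $v_1,\ldots,v_n$, where $v_t$ is a non-negative real random variable drawn from a known distribution $F_t$ (with finite mean), independently across $t$. There are $k$ agents. At each time $t=1,\ldots,n$, the value $v_t$ is revealed to all agents, and every active agent (an agent who has not yet received a reward) decides whether to select $v_t$. If exactly one agent selects $v_t$, it is assigned to that agent. If several agents select it, it is assigned to one of them by the tie-breaking rule. Under random tie-breaking, the reward goes to a uniformly random agent among those selecting it. An agent who receives a reward becomes inactive, and unselected rewards are lost forever. A strategy of an agent is a (possibly randomized) rule that, for each $t$, decides whether to select $v_t$ based on $t$, the realized value $v_t$, and the set of currently active agents. The utility $u_i(S)$ of agent $i$ under strategy profile $S=(S_i,S_{-i})$ is her expected received reward (zero if she receives none). A strategy profile $S$ is a Nash equilibrium if for every agent $i$ and every strategy $S_i'$, $u_i(S_i',S_{-i})\le u_i(S)$. For $j=1,\ldots,n$, $y_j$ denotes the $j$-th largest value among $v_1,\ldots,v_n$. *)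

theory Defs
  imports "HOL-Probability.Probability"
begin

text \<open>
Times are 0,...,n-1 (time t carries value v_t with distribution F t).
Agents are 0,...,k-1. A (behavioural, randomized) strategy of an agent is a
function s t v A in [0,1]: the probability of selecting v_t = v at time t when
A is the set of currently active agents. Agents randomize independently.
\<close>

type_synonym strategy = "nat \<Rightarrow> real \<Rightarrow> nat set \<Rightarrow> real"
type_synonym profile = "nat \<Rightarrow> strategy"

definition valid_strategy :: "strategy \<Rightarrow> bool" where
  "valid_strategy s \<longleftrightarrow>
     (\<forall>t v A. 0 \<le> s t v A \<and> s t v A \<le> 1) \<and>
     (\<forall>t A. (\<lambda>v. s t v A) \<in> borel_measurable borel)"

definition sel_prob :: "profile \<Rightarrow> nat \<Rightarrow> real \<Rightarrow> nat set \<Rightarrow> nat set \<Rightarrow> real" where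
  "sel_prob S t v A T =
     (\<Prod>j\<in>T. S j t v A) * (\<Prod>j\<in>A - T. 1 - S j t v A)"

text \<open>cont F S n i r A: expected reward agent i obtains during the last r steps
(times n-r,...,n-1) when A is the set of active agents at time n-r.\<close>
primrec cont :: "(nat \<Rightarrow> real measure) \<Rightarrow> profile \<Rightarrow> nat \<Rightarrow> nat \<Rightarrow> nat \<Rightarrow> nat set \<Rightarrow> real" where
  "cont F S n i 0 A = 0"
| "cont F S n i (Suc r) A =
     (if i \<notin> A then 0 else
      \<integral>v. (\<Sum>T\<in>Pow A. sel_prob S (n - Suc r) v A T *
              (if T = {} then cont F S n i r A
               else (1 / real (card T)) *
                    (\<Sum>w\<in>T. if w = i then v else cont F S n i r (A - {w}))))
        \<partial>(F (n - Suc r)))"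

definition utility :: "(nat \<Rightarrow> real measure) \<Rightarrow> nat \<Rightarrow> nat \<Rightarrow> profile \<Rightarrow> nat \<Rightarrow> real" where
  "utility F n k S i = cont F S n i n {..<k}"

definition nash_equilibrium :: "(nat \<Rightarrow> real measure) \<Rightarrow> nat \<Rightarrow> nat \<Rightarrow> profile \<Rightarrow> bool" where
  "nash_equilibrium F n k S \<longleftrightarrow>
     (\<forall>i<k. valid_strategy (S i)) \<and>
     (\<forall>i<k. \<forall>s'. valid_strategy s' \<longrightarrow> utility F n k (S(i := s')) i \<le> utility F n k S i)"

definition top_sum :: "nat \<Rightarrow> real list \<Rightarrow> real" where
  "top_sum k xs = sum_list (take k (rev (sort xs)))"

end

theory Submission imports Defs begin

lemma step_pointwise:
  fixes m \<tau> v c0 :: real and k :: nat and P :: "nat set \<Rightarrow> real" and c :: "nat \<Rightarrow> real"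
  assumes fin: "finite A" and iA: "i \<in> A" and cardA: "card A \<le> k" and mt: "m \<le> \<tau>"
    and Pnn: "\<And>T. T \<subseteq> A \<Longrightarrow> 0 \<le> P T" and Psum: "sum P (Pow A) = 1"
    and hlow: "\<And>T. v < \<tau> \<Longrightarrow> T \<subseteq> A \<Longrightarrow> P T \<noteq> 0 \<Longrightarrow> i \<notin> T"
    and hhigh: "\<And>T. \<tau> \<le> v \<Longrightarrow> T \<subseteq> A \<Longrightarrow> P T \<noteq> 0 \<Longrightarrow> i \<in> T"
    and c0: "m \<le> c0" and cw: "\<And>w. w \<in> A \<Longrightarrow> w \<noteq> i \<Longrightarrow> m \<le> c w"
  shows "m + max (v - \<tau>) 0 / real k \<le>
    (\<Sum>T\<in>Pow A. P T * (if T = {} then c0 else (1 / real (card T)) * (\<Sum>w\<in>T. if w = i then v else c w)))"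
proof -
  define L where "L = m + max (v - \<tau>) 0 / real k"
  have kpos: "card A > 0" using fin iA by (auto simp: card_gt_0_iff)
  have "L = (\<Sum>T\<in>Pow A. P T * L)" using Psum by (simp add: sum_distrib_right[symmetric])
  also have "\<dots> \<le> (\<Sum>T\<in>Pow A. P T * (if T = {} then c0 else (1 / real (card T)) * (\<Sum>w\<in>T. if w = i then v else c w)))"
  proof (rule sum_mono)
    fix T assume T: "T \<in> Pow A"
    show "P T * L \<le> P T * (if T = {} then c0 else (1 / real (card T)) * (\<Sum>w\<in>T. if w = i then v else c w))"
    proof (cases "P T = 0")
      case True then show ?thesis by simp
    next
      case False
      have TA: "T \<subseteq> A" using T by auto
      have finT: "finite T" using TA fin finite_subset by blast
      have cardT: "card T \<le> k" using card_mono[OF fin TA] cardA by simp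
      have "L \<le> (if T = {} then c0 else (1 / real (card T)) * (\<Sum>w\<in>T. if w = i then v else c w))"
      proof (cases "v < \<tau>")
        case True
        have iT: "i \<notin> T" using hlow[OF True TA False] .
        have L: "L = m" using True by (simp add: L_def)
        show ?thesis
        proof (cases "T = {}")
          case True then show ?thesis using c0 L by simp
        next
          case ne: False
          have cp: "real (card T) > 0" using ne finT by (simp add: card_gt_0_iff)
          have "real (card T) * m \<le> (\<Sum>w\<in>T. if w = i then v else c w)"
            by (rule sum_bounded_below) (use iT TA cw in auto)
          then have "m \<le> (1 / real (card T)) * (\<Sum>w\<in>T. if w = i then v else c w)"
            using cp by (simp add: field_simps)
          then show ?thesis using ne L by simp
        qed
      next
        case False2: False
        then have tv: "\<tau> \<le> v" by simp
        have iT: "i \<in> T" using hhigh[OF tv TA False] .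
        have ne: "T \<noteq> {}" using iT by auto
        have cp: "real (card T) \<ge> 1" using ne finT by (simp add: card_gt_0_iff Suc_le_eq)
        have s: "(\<Sum>w\<in>T. if w = i then v else c w) = v + (\<Sum>w\<in>T-{i}. if w = i then v else c w)"
          by (subst sum.remove[OF finT iT]) simp
        have "real (card (T - {i})) * m \<le> (\<Sum>w\<in>T-{i}. if w = i then v else c w)"
          by (rule sum_bounded_below) (use TA cw in auto)
        moreover have "real (card (T - {i})) = real (card T) - 1"
        proof -
          have c1: "card (T - {i}) = card T - 1" using iT finT by simp
          have "1 \<le> card T" using ne finT by (simp add: card_gt_0_iff Suc_le_eq)
          then show ?thesis unfolding c1 by (simp add: of_nat_diff)
        qed
        ultimately have sb: "v + (real (card T) - 1) * m \<le> (\<Sum>w\<in>T. if w = i then v else c w)" using s by simp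
        have kk: "real (card T) \<le> real k" using cardT by simp
        have vm: "0 \<le> v - m" using tv mt by simp
        have "(v - \<tau>) / real k \<le> (v - m) / real k" using mt by (simp add: divide_right_mono)
        also have "\<dots> \<le> (v - m) / real (card T)" using vm kk cp
          by (intro divide_left_mono) auto
        finally have f1: "(v - \<tau>) / real k \<le> (v - m) / real (card T)" .
        have e1: "(v + (real (card T) - 1) * m) / real (card T) = m + (v - m) / real (card T)"
          using cp by (simp add: field_simps)
        have e2: "max (v - \<tau>) 0 = v - \<tau>" using tv by simp
        have "m + max (v - \<tau>) 0 / real k \<le> (v + (real (card T) - 1) * m) / real (card T)"
          unfolding e1 e2 using f1 by linarith
        also have "\<dots> \<le> (1 / real (card T)) * (\<Sum>w\<in>T. if w = i then v else c w)"
          using sb cp by (simp add: divide_right_mono)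
        finally show ?thesis using ne by (simp add: L_def)
      qed
      then show ?thesis using Pnn[OF TA] by (intro mult_left_mono) auto
    qed
  qed
  finally show ?thesis by (simp add: L_def)
qed

lemma take_sum_bound:
  fixes ys :: "real list" and \<tau> :: real
  assumes "0 \<le> \<tau>"
  shows "sum_list (take k ys) \<le> real k * \<tau> + sum_list (map (\<lambda>x. max (x - \<tau>) 0) ys)"
  using assms
proof (induction ys arbitrary: k)
  case Nil then show ?case by simp
next
  case (Cons y ys)
  have nn: "0 \<le> sum_list (map (\<lambda>x. max (x - \<tau>) 0) ys)"
    by (rule sum_list_nonneg) auto
  show ?case
  proof (cases k)
    case 0 then show ?thesis using nn Cons.prems by simp
  next
    case (Suc k')
    have "sum_list (take k' ys) \<le> real k' * \<tau> + sum_list (map (\<lambda>x. max (x - \<tau>) 0) ys)"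
      using Cons by blast
    then show ?thesis using Suc by (simp add: algebra_simps max_def)
  qed
qed

lemma top_sum_bound:
  fixes xs :: "real list" and \<tau> :: real
  assumes "0 \<le> \<tau>"
  shows "top_sum k xs \<le> real k * \<tau> + sum_list (map (\<lambda>x. max (x - \<tau>) 0) xs)"
proof -
  have "sum_list (map (\<lambda>x. max (x - \<tau>) 0) (rev (sort xs))) = sum_list (map (\<lambda>x. max (x - \<tau>) 0) xs)"
  proof -
    let ?f = "\<lambda>x. max (x - \<tau>) 0"
    have "sum_list (map ?f (rev (sort xs))) = sum_mset (mset (map ?f (rev (sort xs))))"
      by (rule sum_mset_sum_list[symmetric])
    also have "\<dots> = sum_mset (mset (map ?f xs))" by simp
    also have "\<dots> = sum_list (map ?f xs)" by (rule sum_mset_sum_list)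
    finally show ?thesis .
  qed
  then show ?thesis using take_sum_bound[OF assms, of k "rev (sort xs)"] by (simp add: top_sum_def)
qed

lemma integrable_bounded_factor:
  fixes f g :: "real \<Rightarrow> real"
  assumes "integrable M f" "g \<in> borel_measurable M" "\<And>x. 0 \<le> g x" "\<And>x. g x \<le> 1"
  shows "integrable M (\<lambda>x. g x * f x)"
proof (rule Bochner_Integration.integrable_bound[OF assms(1)])
  show "(\<lambda>x. g x * f x) \<in> borel_measurable M"
    using assms(1,2) by measurable
  show "AE x in M. norm (g x * f x) \<le> norm (f x)"
  proof (rule AE_I2)
    fix x
    have "\<bar>g x\<bar> * \<bar>f x\<bar> \<le> 1 * \<bar>f x\<bar>" using assms(3,4)[of x] by (intro mult_right_mono) auto
    then show "norm (g x * f x) \<le> norm (f x)" by (simp add: abs_mult)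
  qed
qed

lemma dev_bound:
  fixes F :: "nat \<Rightarrow> real measure" and n k i :: nat and S :: profile and \<tau> :: real
  assumes prob: "\<And>t. t < n \<Longrightarrow> prob_space (F t)"
    and sets: "\<And>t. t < n \<Longrightarrow> sets (F t) = sets borel"
    and integ: "\<And>t. t < n \<Longrightarrow> integrable (F t) (\<lambda>v. v)"
    and valid: "\<And>j. j < k \<Longrightarrow> valid_strategy (S j)"
    and ik: "i < k" and tau: "0 \<le> \<tau>"
  shows "r \<le> n \<Longrightarrow> i \<in> A \<Longrightarrow> A \<subseteq> {..<k} \<Longrightarrow>
    min \<tau> ((\<Sum>j<r. (\<integral>v. max (v - \<tau>) 0 \<partial>F (n - Suc j))) / real k)
      \<le> cont F (S(i := (\<lambda>t v A. if \<tau> \<le> v then 1 else 0))) n i r A"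
proof (induction r arbitrary: A)
  case 0 then show ?case using tau by simp
next
  case (Suc r)
  define S' where "S' = S(i := (\<lambda>t v A. if \<tau> \<le> v then 1 else 0))"
  define e where "e t = (\<integral>v. max (v - \<tau>) 0 \<partial>F t)" for t
  define t where "t = n - Suc r"
  define m where "m = min \<tau> ((\<Sum>j<r. e (n - Suc j)) / real k)"
  have tn: "t < n" using Suc.prems(1) by (simp add: t_def)
  interpret P: prob_space "F t" using prob[OF tn] .
  have iA: "i \<in> A" and Ak: "A \<subseteq> {..<k}" using Suc.prems by auto
  have finA: "finite A" using Ak finite_subset by blast
  have cardA: "card A \<le> k" using card_mono[OF _ Ak] by simp
  have IH: "m \<le> cont F S' n i r A'" if "i \<in> A'" "A' \<subseteq> {..<k}" for A'
    unfolding m_def e_def S'_def by (rule Suc.IH[OF Suc_leD[OF Suc.prems(1)] that])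
  have mt: "m \<le> \<tau>" by (simp add: m_def)
  have S'b: "\<And>j v. j \<in> A \<Longrightarrow> 0 \<le> S' j t v A \<and> S' j t v A \<le> 1"
    using valid Ak by (auto simp: S'_def valid_strategy_def)
  have S'm: "\<And>j. j \<in> A \<Longrightarrow> (\<lambda>v. S' j t v A) \<in> borel_measurable (F t)"
  proof -
    fix j assume jA: "j \<in> A"
    have "(\<lambda>v. S' j t v A) \<in> borel_measurable borel"
    proof (cases "j = i")
      case True then show ?thesis by (simp add: S'_def)
    next
      case False then show ?thesis using valid[of j] jA Ak by (auto simp: S'_def valid_strategy_def)
    qed
    then show "(\<lambda>v. S' j t v A) \<in> borel_measurable (F t)"
      by (subst measurable_cong_sets[OF sets[OF tn] refl]) simp
  qed
  define G where "G v = (\<Sum>T\<in>Pow A. sel_prob S' t v A T *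
              (if T = {} then cont F S' n i r A
               else (1 / real (card T)) *
                    (\<Sum>w\<in>T. if w = i then v else cont F S' n i r (A - {w}))))" for v
  have contS: "cont F S' n i (Suc r) A = (\<integral>v. G v \<partial>F t)"
    using iA by (simp add: G_def t_def)
  have selb: "\<And>T v. T \<subseteq> A \<Longrightarrow> 0 \<le> sel_prob S' t v A T \<and> sel_prob S' t v A T \<le> 1"
  proof -
    fix T v assume TA: "T \<subseteq> A"
    have a: "0 \<le> (\<Prod>j\<in>T. S' j t v A) \<and> (\<Prod>j\<in>T. S' j t v A) \<le> 1"
      using S'b TA by (auto intro!: prod_nonneg prod_le_1)
    have b: "0 \<le> (\<Prod>j\<in>A - T. 1 - S' j t v A) \<and> (\<Prod>j\<in>A - T. 1 - S' j t v A) \<le> 1"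
      using S'b by (auto intro!: prod_nonneg prod_le_1)
    show "0 \<le> sel_prob S' t v A T \<and> sel_prob S' t v A T \<le> 1"
      unfolding sel_prob_def using a b by (auto intro: mult_le_one)
  qed
  have selsum: "\<And>v. sum (sel_prob S' t v A) (Pow A) = 1"
  proof -
    fix v
    have "(\<Prod>j\<in>A. S' j t v A + (1 - S' j t v A)) = sum (sel_prob S' t v A) (Pow A)"
      unfolding sel_prob_def by (rule prod_add[OF finA])
    then show "sum (sel_prob S' t v A) (Pow A) = 1" by simp
  qed
  have pw: "m + max (v - \<tau>) 0 / real k \<le> G v" for v
    unfolding G_def
  proof (rule step_pointwise[OF finA iA cardA mt])
    show "\<And>T. T \<subseteq> A \<Longrightarrow> 0 \<le> sel_prob S' t v A T" using selb by blast
    show "sum (sel_prob S' t v A) (Pow A) = 1" by (rule selsum)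
    show "i \<notin> T" if "v < \<tau>" "T \<subseteq> A" "sel_prob S' t v A T \<noteq> 0" for T
    proof
      assume iT: "i \<in> T"
      have "(\<Prod>j\<in>T. S' j t v A) = 0"
        using iT that(1) finite_subset[OF that(2) finA] by (auto simp: S'_def intro!: prod_zero)
      then show False using that(3) by (simp add: sel_prob_def)
    qed
    show "i \<in> T" if "\<tau> \<le> v" "T \<subseteq> A" "sel_prob S' t v A T \<noteq> 0" for T
    proof (rule ccontr)
      assume iT: "i \<notin> T"
      have "(\<Prod>j\<in>A - T. 1 - S' j t v A) = 0"
        using iT iA that(1) finA by (auto simp: S'_def intro!: prod_zero)
      then show False using that(3) by (simp add: sel_prob_def)
    qed
    show "m \<le> cont F S' n i r A" by (rule IH[OF iA Ak])
    show "\<And>w. w \<in> A \<Longrightarrow> w \<noteq> i \<Longrightarrow> m \<le> cont F S' n i r (A - {w})"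
      using iA Ak by (intro IH) auto
  qed
  have intv: "integrable (F t) (\<lambda>v. v)" by (rule integ[OF tn])
  have intmax: "integrable (F t) (\<lambda>v. max (v - \<tau>) 0)"
  proof (rule Bochner_Integration.integrable_bound[of _ "\<lambda>v. \<bar>v\<bar> + \<tau>"])
    show "integrable (F t) (\<lambda>v. \<bar>v\<bar> + \<tau>)" using intv by auto
    show "(\<lambda>v. max (v - \<tau>) 0) \<in> borel_measurable (F t)"
      by (subst measurable_cong_sets[OF sets[OF tn] refl]) simp
    show "AE x in F t. norm (max (x - \<tau>) 0) \<le> norm (\<bar>x\<bar> + \<tau>)" using tau by auto
  qed
  have intG: "integrable (F t) G"
    unfolding G_def
  proof (rule Bochner_Integration.integrable_sum)
    fix T assume T: "T \<in> Pow A"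
    have Qi: "integrable (F t) (\<lambda>v. if T = {} then cont F S' n i r A
               else (1 / real (card T)) * (\<Sum>w\<in>T. if w = i then v else cont F S' n i r (A - {w})))"
    proof (cases "T = {}")
      case True then show ?thesis by simp
    next
      case False
      have "integrable (F t) (\<lambda>v. (\<Sum>w\<in>T. if w = i then v else cont F S' n i r (A - {w})))"
      proof (rule Bochner_Integration.integrable_sum)
        fix w assume "w \<in> T"
        show "integrable (F t) (\<lambda>v. if w = i then v else cont F S' n i r (A - {w}))"
          using intv by (cases "w = i") auto
      qed
      then show ?thesis using False by simp
    qed
    have Pm: "(\<lambda>v. sel_prob S' t v A T) \<in> borel_measurable (F t)"
      unfolding sel_prob_def using S'm T
      by (intro borel_measurable_times borel_measurable_prod borel_measurable_diff) auto
    show "integrable (F t) (\<lambda>v. sel_prob S' t v A T * (if T = {} then cont F S' n i r A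
               else (1 / real (card T)) * (\<Sum>w\<in>T. if w = i then v else cont F S' n i r (A - {w}))))"
      by (rule integrable_bounded_factor[OF Qi Pm]) (use selb T in auto)
  qed
  have "(\<integral>v. m + max (v - \<tau>) 0 / real k \<partial>F t) \<le> (\<integral>v. G v \<partial>F t)"
    by (rule integral_mono[OF _ intG]) (use intmax pw in auto)
  moreover have "(\<integral>v. m + max (v - \<tau>) 0 / real k \<partial>F t) = m + e t / real k"
    using intmax by (simp add: e_def P.prob_space)
  ultimately have low: "m + e t / real k \<le> cont F S' n i (Suc r) A" using contS by simp
  have et: "0 \<le> e t" unfolding e_def by (rule Bochner_Integration.integral_nonneg) auto
  have sumS: "(\<Sum>j<Suc r. e (n - Suc j)) = (\<Sum>j<r. e (n - Suc j)) + e t" by (simp add: t_def)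
  have "min \<tau> ((\<Sum>j<Suc r. e (n - Suc j)) / real k) \<le> m + e t / real k"
  proof -
    have ek: "0 \<le> e t / real k" using et by simp
    define a where "a = (\<Sum>j<r. e (n - Suc j)) / real k"
    have "min \<tau> (a + e t / real k) \<le> min \<tau> a + e t / real k"
      using ek by (cases "\<tau> \<le> a") (simp_all add: min_def)
    then show ?thesis unfolding sumS m_def add_divide_distrib a_def .

  qed
  then have "min \<tau> ((\<Sum>j<Suc r. e (n - Suc j)) / real k) \<le> cont F S' n i (Suc r) A"
    using low by linarith
  then show ?case unfolding S'_def e_def .
qed

lemma opt_bound:
  fixes F :: "nat \<Rightarrow> real measure" and n k :: nat and \<tau> :: real
  assumes prob: "\<And>t. t < n \<Longrightarrow> prob_space (F t)"
    and sets: "\<And>t. t < n \<Longrightarrow> sets (F t) = sets borel"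
    and integ: "\<And>t. t < n \<Longrightarrow> integrable (F t) (\<lambda>v. v)"
    and tau: "0 \<le> \<tau>"
  shows "(\<integral>\<omega>. top_sum k (map \<omega> [0..<n]) \<partial>(PiM {..<n} F))
     \<le> real k * \<tau> + (\<Sum>t<n. (\<integral>v. max (v - \<tau>) 0 \<partial>F t))"
proof -
  let ?M = "PiM {..<n} F"
  interpret M: prob_space ?M by (rule prob_space_PiM) (use prob in auto)
  have hmeas: "(\<lambda>v. max (v - \<tau>) 0) \<in> borel_measurable (F t)" if "t < n" for t
    by (subst measurable_cong_sets[OF sets[OF that] refl]) simp
  have intmax: "integrable (F t) (\<lambda>v. max (v - \<tau>) 0)" if tn: "t < n" for t
  proof (rule Bochner_Integration.integrable_bound[of _ "\<lambda>v. \<bar>v\<bar> + \<tau>"])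
    interpret P: prob_space "F t" using prob[OF tn] .
    show "integrable (F t) (\<lambda>v. \<bar>v\<bar> + \<tau>)" using integ[OF tn] by auto
    show "(\<lambda>v. max (v - \<tau>) 0) \<in> borel_measurable (F t)" by (rule hmeas[OF tn])
    show "AE x in F t. norm (max (x - \<tau>) 0) \<le> norm (\<bar>x\<bar> + \<tau>)" using tau by auto
  qed
  have comp: "integrable ?M (\<lambda>\<omega>. max (\<omega> t - \<tau>) 0) \<and>
      (\<integral>\<omega>. max (\<omega> t - \<tau>) 0 \<partial>?M) = (\<integral>v. max (v - \<tau>) 0 \<partial>F t)" if tn: "t < n" for t
  proof -
    have d: "distr ?M (F t) (\<lambda>\<omega>. \<omega> t) = F t"
      by (rule distr_PiM_component) (use prob tn in auto)
    have m: "(\<lambda>\<omega>. \<omega> t) \<in> measurable ?M (F t)"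
      using tn by (intro measurable_component_singleton) auto
    show ?thesis
      using integrable_distr_eq[OF m hmeas[OF tn]] integral_distr[OF m hmeas[OF tn]] d intmax[OF tn]
      by simp
  qed
  define R where "R \<omega> = real k * \<tau> + (\<Sum>t<n. max (\<omega> t - \<tau>) 0)" for \<omega> :: "nat \<Rightarrow> real"
  have intR: "integrable ?M R"
    unfolding R_def using comp by (intro Bochner_Integration.integrable_add Bochner_Integration.integrable_sum) auto
  have intRv: "(\<integral>\<omega>. R \<omega> \<partial>?M) = real k * \<tau> + (\<Sum>t<n. (\<integral>v. max (v - \<tau>) 0 \<partial>F t))"
    unfolding R_def using comp
    by (subst Bochner_Integration.integral_add) (auto simp: Bochner_Integration.integral_sum M.prob_space intro!: Bochner_Integration.integrable_sum)
  have pw: "top_sum k (map \<omega> [0..<n]) \<le> R \<omega>" for \<omega>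
  proof -
    have "sum_list (map (\<lambda>x. max (x - \<tau>) 0) (map \<omega> [0..<n])) = (\<Sum>t<n. max (\<omega> t - \<tau>) 0)"
      by (simp add: interv_sum_list_conv_sum_set_nat comp_def atLeast0LessThan)
    then show ?thesis using top_sum_bound[OF tau, of k "map \<omega> [0..<n]"] by (simp add: R_def)
  qed
  have Rnn: "0 \<le> (\<integral>\<omega>. R \<omega> \<partial>?M)"
    by (rule Bochner_Integration.integral_nonneg) (use tau in \<open>auto simp: R_def intro!: sum_nonneg add_nonneg_nonneg\<close>)
  show ?thesis
  proof (cases "integrable ?M (\<lambda>\<omega>. top_sum k (map \<omega> [0..<n]))")
    case True
    have "(\<integral>\<omega>. top_sum k (map \<omega> [0..<n]) \<partial>?M) \<le> (\<integral>\<omega>. R \<omega> \<partial>?M)"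
      by (rule integral_mono[OF True intR]) (rule pw)
    then show ?thesis using intRv by simp
  next
    case False
    then show ?thesis using Rnn intRv by (simp add: not_integrable_integral_eq)
  qed
qed

theorem mainTheorem4:
  fixes F :: "nat \<Rightarrow> real measure" and n k :: nat and S :: profile
  assumes "\<And>t. t < n \<Longrightarrow> prob_space (F t)"
    and "\<And>t. t < n \<Longrightarrow> sets (F t) = sets borel"
    and "\<And>t. t < n \<Longrightarrow> AE v in F t. 0 \<le> v"
    and "\<And>t. t < n \<Longrightarrow> integrable (F t) (\<lambda>v. v)"
    and "k \<le> n"
    and "nash_equilibrium F n k S"
  shows "(\<Sum>i<k. utility F n k S i) \<ge>
           (1/2) * (\<integral>\<omega>. top_sum k (map \<omega> [0..<n]) \<partial>(PiM {..<n} F))"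
proof (cases "k = 0")
  case True
  have z: "top_sum k xs = 0" for xs unfolding top_sum_def True by simp
  show ?thesis unfolding z using True by simp
next
  case False
  define OPT where "OPT = (\<integral>\<omega>. top_sum k (map \<omega> [0..<n]) \<partial>(PiM {..<n} F))"
  define \<tau> where "\<tau> = max 0 OPT / (2 * real k)"
  define \<Phi> where "\<Phi> = (\<Sum>t<n. (\<integral>v. max (v - \<tau>) 0 \<partial>F t))"
  have kp: "real k > 0" using False by simp
  have tau: "0 \<le> \<tau>" unfolding \<tau>_def using kp by simp
  have valid: "\<And>j. j < k \<Longrightarrow> valid_strategy (S j)" using assms(6) by (simp add: nash_equilibrium_def)
  have ob: "OPT \<le> real k * \<tau> + \<Phi>"
    unfolding OPT_def \<Phi>_def by (rule opt_bound[OF assms(1,2,4) tau])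
  have Phinn: "0 \<le> \<Phi>" unfolding \<Phi>_def by (intro sum_nonneg Bochner_Integration.integral_nonneg) auto
  have ktau: "real k * \<tau> = max 0 OPT / 2" unfolding \<tau>_def using kp by (simp add: field_simps)
  have Phik: "real k * \<tau> \<le> \<Phi>"
  proof (cases "OPT \<le> 0")
    case True
    then have "real k * \<tau> = 0" using ktau by (simp add: max_absorb1)
    then show ?thesis using Phinn by linarith
  next
    case False then show ?thesis using ktau ob by simp
  qed
  have mineq: "min \<tau> (\<Phi> / real k) = \<tau>"
    using Phik kp by (simp add: min_def field_simps)
  have ui: "\<tau> \<le> utility F n k S i" if ik: "i < k" for i
  proof -
    define s' where "s' = (\<lambda>(t::nat) v (A::nat set). if \<tau> \<le> v then 1 else (0::real))"
    have vs: "valid_strategy s'" unfolding valid_strategy_def s'_def by auto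
    have "min \<tau> ((\<Sum>j<n. (\<integral>v. max (v - \<tau>) 0 \<partial>F (n - Suc j))) / real k)
      \<le> cont F (S(i := s')) n i n {..<k}"
      unfolding s'_def by (rule dev_bound[OF assms(1,2,4) valid ik tau]) (use ik in auto)
    moreover have "(\<Sum>j<n. (\<integral>v. max (v - \<tau>) 0 \<partial>F (n - Suc j))) = \<Phi>"
      unfolding \<Phi>_def by (rule sum.nat_diff_reindex)
    ultimately have "\<tau> \<le> utility F n k (S(i := s')) i" using mineq by (simp add: utility_def)
    also have "\<dots> \<le> utility F n k S i" using assms(6) ik vs by (simp add: nash_equilibrium_def)
    finally show ?thesis .
  qed
  have "real k * \<tau> \<le> (\<Sum>i<k. utility F n k S i)"
    using sum_bounded_below[of "{..<k}" \<tau> "utility F n k S"] ui by simp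
  moreover have "(1/2) * OPT \<le> real k * \<tau>" using ktau by simp
  ultimately show ?thesis unfolding OPT_def by linarith
qed

end
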